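(* Consider the setting described in the context and suppose Assumptions A1 and A2 hold. For nodes $k,l$ and iteration $i$ of the non-cooperative Gauss–Newton update, let $E_{kl}^i=Q_k(x_k^i)-Q_l(x_l^i)$. Then $$\|E_{kl}^i\|\le n_{kl}\gamma_F\|x_k^i-x_l^i\|+(n_{k|l}+n_{l|k})\sigma_{max}^2,$$ and $\|[Q_l(x_l^0)]^{-1}E_{kl}^0\|<1$ holds when $$\frac{n_{k|l}+n_{l|k}}{n_l}<\frac{\sigma_{min}^2}{\sigma_{max}^2}<1.$$
   Context: Network: a node set $\mathcal{N}=\{1,\ldots,N\}$; each node $k$ has a neighborhood $\mathcal{N}_k\subseteq\mathcal{N}$ containing $k$, with $n_k=|\mathcal{N}_k|$. $n_{kl}$ is the number of nodes in both $\mathcal{N}_k$ and $\mathcal{N}_l$; $n_{k|l}$ is the number of nodes in $\mathcal{N}_k$ but not in $\mathcal{N}_l$. The unknown parameter lies in a closed convex set $\mathbb{X}\subset\mathbb{R}^M$. Each node has a continuously differentiable $f_k:\mathbb{R}^M\to\mathbb{R}$ with row gradient $F_k(x)$ ($1\times M$); $f=(f_1,\ldots,f_N)^T$, $F$ its $N\times M$ Jacobian; $F_{l\in\mathcal{N}_k}(x)$ is the matrix with rows $F_l(x)$, $l\in\mathcal{N}_k$, and $f_{l\in\mathcal{N}_k}(x)$ the vector of $f_l(x)$, $l\in\mathcal{N}_k$. For $y\in\mathbb{R}^M$, $Q_k(y)=\sum_{l\in\mathcal{N}_k}F_l^T(y)F_l(y)$, $q_k(y)=\sum_{l\in\mathcal{N}_k}F_l^T(y)f_l(y)$.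 The non-cooperative Gauss–Newton update, from a common initial estimate $x_k^0=x^0$ for all $k$, is $x_k^{i+1}=x_k^i-\alpha[Q_k(x_k^i)]^{-1}q_k(x_k^i)$, $\alpha\in(0,1]$. $x^*$ is a local minimizer of $\|f(x)\|^2$. Assumption A1: (1) stationary points $x^s$ with $2F^T(x^s)f(x^s)=0$ exist; (2) $\Sigma_{min}=\min_{x\in\mathbb{X}}\sqrt{\lambda_{min}(F^TF)}$, $\Sigma_{max}=\max_{x\in\mathbb{X}}\sqrt{\lambda_{max}(F^TF)}$ satisfy $0<\Sigma_{min}<\Sigma_{max}<\infty$. Assumption A2: (1) $\|f_{l\in\mathcal{N}_k}(x_k^i)\|\le e_{max}$ for estimates near $x^*$, and $\|f_{l\in\mathcal{N}_k}(x^* )\|=e_{min}$ is its minimum; (2) $\sigma_{min}=\min\sqrt{\lambda_{min}(F_k^T(x)F_k(x))}$, $\sigma_{max}=\max\sqrt{\lambda_{max}(F_k^T(x)F_k(x))}$ over $x\in\mathbb{X}$ and all $k$ satisfy $0<\sigma_{min}<\sigma_{max}<\infty$; (3) $F_{l\in\mathcal{N}_k}$, $F_k$ are $\omega$-Lipschitz on $\mathbb{X}$, and $\|F_k^T(x)f_k(x)-F_k^T(y)f_k(y)\|\le\gamma_f\|x-y\|$, $\|F_k^T(x)F_k(x)-F_k^T(y)F_k(y)\|\le\gamma_F\|x-y\|$ on $\mathbb{X}$, with $\gamma_f\ge\omega(e_{max}+\Sigma_{max})$, $\gamma_F\ge2\Sigma_{max}\omega$. *)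

theory Defs
  imports "HOL-Analysis.Analysis"
begin

text \<open>Matrices are M x M real matrices, represented as real^'m^'m; vectors in R^M
  as real^'m. A row gradient F_k(x) (1 x M) is represented by the vector real^'m,
  so that F_k^T F_k is the outer product.\<close>

definition outer :: "real^'m \<Rightarrow> real^'m \<Rightarrow> real^'m^'m" where
  "outer u v = (\<chi> i j. u$i * v$j)"

definition mnorm :: "real^'m^'m \<Rightarrow> real" where
  "mnorm A = onorm (\<lambda>v. A *v v)"

definition eigval :: "real^'m^'m \<Rightarrow> real \<Rightarrow> bool" where
  "eigval A \<mu> \<longleftrightarrow> (\<exists>v. v \<noteq> 0 \<and> A *v v = \<mu> *\<^sub>R v)"

definition lambda_min :: "real^'m^'m \<Rightarrow> real" where
  "lambda_min A = Inf {\<mu>. eigval A \<mu>}"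

definition lambda_max :: "real^'m^'m \<Rightarrow> real" where
  "lambda_max A = Sup {\<mu>. eigval A \<mu>}"

text \<open>Spectral norm of the (card S) x M matrix with rows G l, l in S.\<close>
definition stack_norm :: "nat set \<Rightarrow> (nat \<Rightarrow> real^'m) \<Rightarrow> real" where
  "stack_norm S G = Sup {sqrt (\<Sum>l\<in>S. (G l \<bullet> v)\<^sup>2) | v. norm v \<le> 1}"

definition Qmat :: "(nat \<Rightarrow> nat set) \<Rightarrow> (nat \<Rightarrow> real^'m \<Rightarrow> real^'m) \<Rightarrow> nat \<Rightarrow> real^'m \<Rightarrow> real^'m^'m" where
  "Qmat Nb F k y = (\<Sum>l\<in>Nb k. outer (F l y) (F l y))"

definition qvec :: "(nat \<Rightarrow> nat set) \<Rightarrow> (nat \<Rightarrow> real^'m \<Rightarrow> real) \<Rightarrow> (nat \<Rightarrow> real^'m \<Rightarrow> real^'m) \<Rightarrow> nat \<Rightarrow> real^'m \<Rightarrow> real^'m" where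
  "qvec Nb f F k y = (\<Sum>l\<in>Nb k. f l y *\<^sub>R F l y)"

end

theory Submission
  imports Defs
begin

lemma outer_mv: "outer u v *v h = (v \<bullet> h) *\<^sub>R u"
  by (simp add: vec_eq_iff matrix_vector_mult_def outer_def inner_vec_def sum_distrib_left algebra_simps)

lemma mnorm_le: "(\<And>h. norm (A *v h) \<le> b * norm h) \<Longrightarrow> mnorm A \<le> b"
  unfolding mnorm_def by (rule onorm_le) auto

lemma mnorm_mv: "norm (A *v h) \<le> mnorm A * norm h"
  unfolding mnorm_def by (rule onorm) simp

lemma sum_mv: "(\<Sum>i\<in>S. A i) *v h = (\<Sum>i\<in>S. A i *v h)"
  by (induction S rule: infinite_finite_induct) (auto simp: matrix_vector_mult_add_rdistrib)

lemma mnorm_add: "mnorm (A + B) \<le> mnorm A + mnorm B"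
proof (rule mnorm_le)
  fix h
  have "norm ((A + B) *v h) \<le> norm (A *v h) + norm (B *v h)"
    unfolding matrix_vector_mult_add_rdistrib by (rule norm_triangle_ineq)
  also have "\<dots> \<le> mnorm A * norm h + mnorm B * norm h" by (intro add_mono mnorm_mv)
  finally show "norm ((A + B) *v h) \<le> (mnorm A + mnorm B) * norm h" by (simp add: distrib_right)
qed

lemma mnorm_diff: "mnorm (A - B) \<le> mnorm A + mnorm B"
proof (rule mnorm_le)
  fix h
  have "norm ((A - B) *v h) \<le> norm (A *v h) + norm (B *v h)"
    unfolding matrix_vector_mult_diff_rdistrib by (rule norm_triangle_ineq4)
  also have "\<dots> \<le> mnorm A * norm h + mnorm B * norm h" by (intro add_mono mnorm_mv)
  finally show "norm ((A - B) *v h) \<le> (mnorm A + mnorm B) * norm h" by (simp add: distrib_right)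
qed

lemma mnorm_sum: "mnorm (\<Sum>i\<in>S. A i) \<le> (\<Sum>i\<in>S. mnorm (A i))"
proof (rule mnorm_le)
  fix h
  have "norm ((\<Sum>i\<in>S. A i) *v h) \<le> (\<Sum>i\<in>S. norm (A i *v h))"
    unfolding sum_mv by (rule norm_sum)
  also have "\<dots> \<le> (\<Sum>i\<in>S. mnorm (A i) * norm h)"
    by (intro sum_mono mnorm_mv)
  finally show "norm ((\<Sum>i\<in>S. A i) *v h) \<le> (\<Sum>i\<in>S. mnorm (A i)) * norm h"
    by (simp add: sum_distrib_right)
qed

lemma mnorm_outer: "mnorm (outer v v) \<le> (norm v)\<^sup>2"
proof (rule mnorm_le)
  fix h
  have "norm (outer v v *v h) = \<bar>v \<bullet> h\<bar> * norm v" by (simp add: outer_mv)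
  also have "\<dots> \<le> norm v * norm h * norm v"
    by (intro mult_right_mono Cauchy_Schwarz_ineq2) auto
  finally show "norm (outer v v *v h) \<le> (norm v)\<^sup>2 * norm h" by (simp add: power2_eq_square mult_ac)
qed

lemma scal_mv: "(c *\<^sub>R mat 1) *v h = c *\<^sub>R (h::real^'m)"
  by (simp add: vec_eq_iff matrix_vector_mult_def mat_def if_distrib if_distribR sum.delta cong: if_cong)

lemma mnorm_scal: "mnorm (c *\<^sub>R mat 1 :: real^'m^'m) \<le> \<bar>c\<bar>"
  by (rule mnorm_le) (simp add: scal_mv)

lemma exists_nonzero: "\<exists>u::real^'m. u \<noteq> 0"
  by (rule exI[of _ "axis undefined 1"]) (simp add: axis_eq_0_iff)

lemma eig_bounds:
  assumes "eigval (outer v v) \<mu>" shows "0 \<le> \<mu> \<and> \<mu> \<le> (norm v)\<^sup>2"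
proof -
  obtain u where u: "u \<noteq> 0" "(v \<bullet> u) *\<^sub>R v = \<mu> *\<^sub>R u"
    using assms by (auto simp: eigval_def outer_mv)
  have "u \<bullet> ((v \<bullet> u) *\<^sub>R v) = u \<bullet> (\<mu> *\<^sub>R u)" using u by simp
  hence e: "(v \<bullet> u)\<^sup>2 = \<mu> * (norm u)\<^sup>2"
    by (simp add: power2_eq_square inner_commute flip: power2_norm_eq_inner)
  have pos: "(norm u)\<^sup>2 > 0" using u by simp
  have cs: "(v \<bullet> u)\<^sup>2 \<le> (norm v)\<^sup>2 * (norm u)\<^sup>2"
  proof -
    have "\<bar>v \<bullet> u\<bar>\<^sup>2 \<le> (norm v * norm u)\<^sup>2" by (intro power_mono Cauchy_Schwarz_ineq2) auto
    thus ?thesis by (simp add: power_mult_distrib)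
  qed
  have "0 \<le> \<mu> * (norm u)\<^sup>2" unfolding e[symmetric] by simp
  hence "0 \<le> \<mu>" using pos by (simp add: zero_le_mult_iff)
  moreover have "\<mu> * (norm u)\<^sup>2 \<le> (norm v)\<^sup>2 * (norm u)\<^sup>2" using e cs by simp
  hence "\<mu> \<le> (norm v)\<^sup>2" using pos by simp
  ultimately show ?thesis by simp
qed

lemma eig_norm: "v \<noteq> 0 \<Longrightarrow> eigval (outer v v) ((norm v)\<^sup>2)"
  unfolding eigval_def by (rule exI[of _ v]) (simp add: outer_mv power2_norm_eq_inner)

lemma eig_zero: "h \<noteq> 0 \<Longrightarrow> v \<bullet> h = 0 \<Longrightarrow> eigval (outer v v) 0"
  unfolding eigval_def by (rule exI[of _ h]) (simp add: outer_mv)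

lemma eig_ne: "\<exists>\<mu>. eigval (outer v v) \<mu>"
proof (cases "v = 0")
  case True
  obtain u :: "real^'a" where "u \<noteq> 0" using exists_nonzero by blast
  then show ?thesis using eig_zero[of u v] True by auto
next
  case False then show ?thesis using eig_norm by blast
qed

lemma lmin_ge0: "0 \<le> lambda_min (outer v v)"
  unfolding lambda_min_def using eig_ne[of v] eig_bounds[of v]
  by (intro cInf_greatest) auto

lemma lmin_le: "eigval (outer v v) \<mu> \<Longrightarrow> lambda_min (outer v v) \<le> \<mu>"
  unfolding lambda_min_def using eig_bounds[of v]
  by (intro cInf_lower) (auto simp: bdd_below_def)

lemma lmax_ge: "eigval (outer v v) \<mu> \<Longrightarrow> \<mu> \<le> lambda_max (outer v v)"
  unfolding lambda_max_def using eig_bounds[of v]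
  by (intro cSup_upper) (auto simp: bdd_above_def)

lemma inv_scal:
  assumes "c \<noteq> 0"
  shows "matrix_inv (c *\<^sub>R mat 1 :: real^'m^'m) = (1/c) *\<^sub>R mat 1"
  unfolding matrix_inv_def
proof (rule some_equality)
  show "c *\<^sub>R mat 1 ** ((1 / c) *\<^sub>R mat 1) = (mat 1 :: real^'m^'m) \<and>
        (1 / c) *\<^sub>R mat 1 ** (c *\<^sub>R mat 1) = (mat 1 :: real^'m^'m)"
    using assms by (simp add: matrix_eq matrix_vector_mul_assoc[symmetric] scal_mv)
next
  fix A :: "real^'m^'m"
  assume "c *\<^sub>R mat 1 ** A = mat 1 \<and> A ** (c *\<^sub>R mat 1) = mat 1"
  hence A1: "c *\<^sub>R mat 1 ** A = mat 1" by blast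
  have hA: "c *\<^sub>R (A *v h) = h" for h
  proof -
    have "(c *\<^sub>R mat 1 ** A) *v h = h" unfolding A1 by simp
    thus ?thesis by (simp only: matrix_vector_mul_assoc[symmetric] scal_mv)
  qed
  have "A *v h = ((1 / c) *\<^sub>R mat 1) *v h" for h
  proof -
    have "A *v h = (1 / c) *\<^sub>R (c *\<^sub>R (A *v h))" using assms by simp
    also have "\<dots> = (1 / c) *\<^sub>R h" using hA by simp
    finally show ?thesis by (simp add: scal_mv)
  qed
  thus "A = (1 / c) *\<^sub>R mat 1" using matrix_eq by blast
qed

theorem corollary1:
  fixes N :: nat and Nb :: "nat \<Rightarrow> nat set" and X :: "(real^'m) set"
    and f :: "nat \<Rightarrow> real^'m \<Rightarrow> real" and F :: "nat \<Rightarrow> real^'m \<Rightarrow> real^'m"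
    and x :: "nat \<Rightarrow> nat \<Rightarrow> real^'m" and x0 xstar :: "real^'m" and \<alpha> :: real
    and Sigma_min Sigma_max sigma_min sigma_max e_max \<omega> \<gamma>_f \<gamma>_F :: real
    and k l :: nat
  assumes
    \<comment> \<open>network\<close>
    nbhd_sub: "\<And>j. j \<in> {1..N} \<Longrightarrow> Nb j \<subseteq> {1..N}"
    and nbhd_self: "\<And>j. j \<in> {1..N} \<Longrightarrow> j \<in> Nb j"
    and kl: "k \<in> {1..N}" "l \<in> {1..N}"
    \<comment> \<open>parameter set\<close>
    and X_closed: "closed X" and X_convex: "convex X"
    \<comment> \<open>continuously differentiable f_k with row gradient F_k\<close>
    and f_deriv: "\<And>j y. j \<in> {1..N} \<Longrightarrow> (f j has_derivative (\<lambda>h. F j y \<bullet> h)) (at y)"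
    and F_cont: "\<And>j. j \<in> {1..N} \<Longrightarrow> continuous_on UNIV (F j)"
    \<comment> \<open>non-cooperative Gauss-Newton iteration\<close>
    and alpha: "0 < \<alpha>" "\<alpha> \<le> 1"
    and x_init: "\<And>j. j \<in> {1..N} \<Longrightarrow> x j 0 = x0"
    and x_step: "\<And>j i. j \<in> {1..N} \<Longrightarrow>
        x j (Suc i) = x j i - \<alpha> *\<^sub>R (matrix_inv (Qmat Nb F j (x j i)) *v qvec Nb f F j (x j i))"
    and x_in_X: "\<And>j i. j \<in> {1..N} \<Longrightarrow> x j i \<in> X"
    \<comment> \<open>x* is a local minimizer of ||f(x)||^2\<close>
    and xstar_locmin: "\<exists>e>0. \<forall>y. dist y xstar < e \<longrightarrow>
        (\<Sum>j\<in>{1..N}. (f j xstar)\<^sup>2) \<le> (\<Sum>j\<in>{1..N}. (f j y)\<^sup>2)"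
    \<comment> \<open>Assumption A1\<close>
    and A1_stat: "\<exists>xs. 2 *\<^sub>R (\<Sum>j\<in>{1..N}. f j xs *\<^sub>R F j xs) = 0"
    and A1_Smin: "Sigma_min = Inf {sqrt (lambda_min (\<Sum>j\<in>{1..N}. outer (F j y) (F j y))) | y. y \<in> X}"
    and A1_Smax: "Sigma_max = Sup {sqrt (lambda_max (\<Sum>j\<in>{1..N}. outer (F j y) (F j y))) | y. y \<in> X}"
    and A1_Sbdd: "bdd_above {sqrt (lambda_max (\<Sum>j\<in>{1..N}. outer (F j y) (F j y))) | y. y \<in> X}"
    and A1_Sord: "0 < Sigma_min" "Sigma_min < Sigma_max"
    \<comment> \<open>Assumption A2 (1)\<close>
    and A2_emax: "\<And>j i. j \<in> {1..N} \<Longrightarrow> sqrt (\<Sum>m\<in>Nb j. (f m (x j i))\<^sup>2) \<le> e_max"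
    \<comment> \<open>Assumption A2 (2)\<close>
    and A2_smin: "sigma_min = Inf {sqrt (lambda_min (outer (F j y) (F j y))) | j y. j \<in> {1..N} \<and> y \<in> X}"
    and A2_smax: "sigma_max = Sup {sqrt (lambda_max (outer (F j y) (F j y))) | j y. j \<in> {1..N} \<and> y \<in> X}"
    and A2_sbdd: "bdd_above {sqrt (lambda_max (outer (F j y) (F j y))) | j y. j \<in> {1..N} \<and> y \<in> X}"
    and A2_sord: "0 < sigma_min" "sigma_min < sigma_max"
    \<comment> \<open>Assumption A2 (3)\<close>
    and A2_Lip_stack: "\<And>j y z. j \<in> {1..N} \<Longrightarrow> y \<in> X \<Longrightarrow> z \<in> X \<Longrightarrow>
        stack_norm (Nb j) (\<lambda>m. F m y - F m z) \<le> \<omega> * norm (y - z)"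
    and A2_Lip_F: "\<And>j y z. j \<in> {1..N} \<Longrightarrow> y \<in> X \<Longrightarrow> z \<in> X \<Longrightarrow>
        norm (F j y - F j z) \<le> \<omega> * norm (y - z)"
    and A2_gf: "\<And>j y z. j \<in> {1..N} \<Longrightarrow> y \<in> X \<Longrightarrow> z \<in> X \<Longrightarrow>
        norm (f j y *\<^sub>R F j y - f j z *\<^sub>R F j z) \<le> \<gamma>_f * norm (y - z)"
    and A2_gF: "\<And>j y z. j \<in> {1..N} \<Longrightarrow> y \<in> X \<Longrightarrow> z \<in> X \<Longrightarrow>
        mnorm (outer (F j y) (F j y) - outer (F j z) (F j z)) \<le> \<gamma>_F * norm (y - z)"
    and A2_gf_ge: "\<gamma>_f \<ge> \<omega> * (e_max + Sigma_max)"
    and A2_gF_ge: "\<gamma>_F \<ge> 2 * Sigma_max * \<omega>"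
  shows
    "(\<forall>i. mnorm (Qmat Nb F k (x k i) - Qmat Nb F l (x l i))
          \<le> real (card (Nb k \<inter> Nb l)) * \<gamma>_F * norm (x k i - x l i)
            + real (card (Nb k - Nb l) + card (Nb l - Nb k)) * sigma_max\<^sup>2)
     \<and> (real (card (Nb k - Nb l) + card (Nb l - Nb k)) / real (card (Nb l))
            < sigma_min\<^sup>2 / sigma_max\<^sup>2
        \<and> sigma_min\<^sup>2 / sigma_max\<^sup>2 < 1
        \<longrightarrow> mnorm (matrix_inv (Qmat Nb F l (x l 0))
                  ** (Qmat Nb F k (x k 0) - Qmat Nb F l (x l 0))) < 1)"
  proof -
  have finN: "finite (Nb j)" if "j \<in> {1..N}" for j
    using nbhd_sub[OF that] finite_subset by blast
  have key: "sigma_min \<le> norm (F j y) \<and> norm (F j y) \<le> sigma_max \<and> (\<forall>h. F j y \<bullet> h = 0 \<longrightarrow> h = 0)"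
    if j: "j \<in> {1..N}" and y: "y \<in> X" for j y
  proof -
    define v where "v = F j y"
    have bdd: "bdd_below {sqrt (lambda_min (outer (F j y) (F j y))) | j y. j \<in> {1..N} \<and> y \<in> X}"
      unfolding bdd_below_def using lmin_ge0 by (auto intro!: exI[of _ 0])
    have smin: "sigma_min \<le> sqrt (lambda_min (outer v v))"
      unfolding A2_smin v_def by (rule cInf_lower[OF _ bdd]) (use j y in auto)
    have smax: "sqrt (lambda_max (outer v v)) \<le> sigma_max"
      unfolding A2_smax v_def by (rule cSup_upper[OF _ A2_sbdd]) (use j y in auto)
    have orth: "\<forall>h. v \<bullet> h = 0 \<longrightarrow> h = 0"
    proof (intro allI impI, rule ccontr)
      fix h assume "v \<bullet> h = 0" "h \<noteq> 0"
      hence "lambda_min (outer v v) \<le> 0" using eig_zero lmin_le by blast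
      hence "lambda_min (outer v v) = 0" using lmin_ge0[of v] by linarith
      thus False using smin A2_sord by simp
    qed
    have "v \<noteq> 0"
    proof
      assume "v = 0"
      obtain u :: "real^'m" where "u \<noteq> 0" using exists_nonzero by blast
      moreover have "v \<bullet> u = 0" using \<open>v = 0\<close> by simp
      ultimately show False using orth by blast
    qed
    hence e: "eigval (outer v v) ((norm v)\<^sup>2)" by (rule eig_norm)
    have sq: "sqrt ((norm v)\<^sup>2) = norm v" by simp
    have "sqrt (lambda_min (outer v v)) \<le> sqrt ((norm v)\<^sup>2)"
      using lmin_le[OF e] by (rule real_sqrt_le_mono)
    hence "sigma_min \<le> norm v" using smin sq by linarith
    moreover have "sqrt ((norm v)\<^sup>2) \<le> sqrt (lambda_max (outer v v))"
      using lmax_ge[OF e] by (rule real_sqrt_le_mono)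
    hence "norm v \<le> sigma_max" using smax sq by linarith
    ultimately show ?thesis using orth v_def by blast
  qed
  have k1: "k \<in> {1..N}" and l1: "l \<in> {1..N}" using kl by auto
  have fk: "finite (Nb k)" and fl: "finite (Nb l)" using finN k1 l1 by auto
  have sq_le: "(norm (F m y))\<^sup>2 \<le> sigma_max\<^sup>2" if "m \<in> {1..N}" "y \<in> X" for m y
    using key[OF that] by (intro power_mono) auto
  have mem: "m \<in> {1..N}" if "m \<in> Nb j" "j \<in> {1..N}" for m j using nbhd_sub that by blast
  have part1: "mnorm (Qmat Nb F k (x k i) - Qmat Nb F l (x l i))
          \<le> real (card (Nb k \<inter> Nb l)) * \<gamma>_F * norm (x k i - x l i)
            + real (card (Nb k - Nb l) + card (Nb l - Nb k)) * sigma_max\<^sup>2" for i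
  proof -
    define a where "a = x k i"
    define b where "b = x l i"
    have aX: "a \<in> X" and bX: "b \<in> X" using x_in_X k1 l1 a_def b_def by auto
    define G where "G = (\<lambda>m y. outer (F m y) (F m y))"
    have dec: "Qmat Nb F k a - Qmat Nb F l b =
       (\<Sum>m\<in>Nb k \<inter> Nb l. G m a - G m b) + (\<Sum>m\<in>Nb k - Nb l. G m a) - (\<Sum>m\<in>Nb l - Nb k. G m b)"
    proof -
      have e1: "Qmat Nb F k a = (\<Sum>m\<in>Nb k \<inter> Nb l. G m a) + (\<Sum>m\<in>Nb k - Nb l. G m a)"
        unfolding Qmat_def G_def by (rule sum.Int_Diff[OF fk])
      have e2: "Qmat Nb F l b = (\<Sum>m\<in>Nb k \<inter> Nb l. G m b) + (\<Sum>m\<in>Nb l - Nb k. G m b)"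
        unfolding Qmat_def G_def Int_commute[of "Nb k"] by (rule sum.Int_Diff[OF fl])
      show ?thesis unfolding e1 e2 sum_subtractf by (simp add: algebra_simps)
    qed
    have "mnorm (Qmat Nb F k a - Qmat Nb F l b) \<le>
       mnorm (\<Sum>m\<in>Nb k \<inter> Nb l. G m a - G m b) + mnorm (\<Sum>m\<in>Nb k - Nb l. G m a) + mnorm (\<Sum>m\<in>Nb l - Nb k. G m b)"
      unfolding dec
      using mnorm_diff[of "(\<Sum>m\<in>Nb k \<inter> Nb l. G m a - G m b) + (\<Sum>m\<in>Nb k - Nb l. G m a)" "\<Sum>m\<in>Nb l - Nb k. G m b"]
        mnorm_add[of "\<Sum>m\<in>Nb k \<inter> Nb l. G m a - G m b" "\<Sum>m\<in>Nb k - Nb l. G m a"]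
      by linarith
    also have "\<dots> \<le> (\<Sum>m\<in>Nb k \<inter> Nb l. \<gamma>_F * norm (a - b)) + (\<Sum>m\<in>Nb k - Nb l. sigma_max\<^sup>2) + (\<Sum>m\<in>Nb l - Nb k. sigma_max\<^sup>2)"
    proof (intro add_mono order_trans[OF mnorm_sum] sum_mono)
      fix m assume "m \<in> Nb k \<inter> Nb l"
      then show "mnorm (G m a - G m b) \<le> \<gamma>_F * norm (a - b)"
        unfolding G_def using A2_gF mem k1 aX bX by blast
    next
      fix m assume "m \<in> Nb k - Nb l"
      then show "mnorm (G m a) \<le> sigma_max\<^sup>2"
        unfolding G_def using mnorm_outer sq_le mem k1 aX by (meson DiffD1 order_trans)
    next
      fix m assume "m \<in> Nb l - Nb k"
      then show "mnorm (G m b) \<le> sigma_max\<^sup>2"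
        unfolding G_def using mnorm_outer sq_le mem l1 bX by (meson DiffD1 order_trans)
    qed
    also have "\<dots> = real (card (Nb k \<inter> Nb l)) * \<gamma>_F * norm (a - b)
            + real (card (Nb k - Nb l) + card (Nb l - Nb k)) * sigma_max\<^sup>2"
      by (simp add: algebra_simps)
    finally show ?thesis unfolding a_def b_def .
  qed
  have part2: "mnorm (matrix_inv (Qmat Nb F l (x l 0))
                  ** (Qmat Nb F k (x k 0) - Qmat Nb F l (x l 0))) < 1"
    if hyp: "real (card (Nb k - Nb l) + card (Nb l - Nb k)) / real (card (Nb l))
            < sigma_min\<^sup>2 / sigma_max\<^sup>2"
  proof -
    have x0X: "x0 \<in> X" using x_in_X[OF k1, of 0] x_init[OF k1] by simp
    have outer_eq: "outer (F m x0) (F m x0) = (norm (F m x0))\<^sup>2 *\<^sub>R mat 1" if m: "m \<in> {1..N}" for m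
    proof -
      define v where "v = F m x0"
      have orth: "\<forall>h. v \<bullet> h = 0 \<longrightarrow> h = 0" and nz: "v \<noteq> 0"
        using key[OF m x0X] A2_sord v_def by auto
      have "outer v v *v h = (norm v)\<^sup>2 *\<^sub>R mat 1 *v h" for h
      proof -
        define h' where "h' = h - ((v \<bullet> h) / (norm v)\<^sup>2) *\<^sub>R v"
        have "v \<bullet> h' = 0" using nz unfolding h'_def
          by (simp add: inner_diff_right power2_norm_eq_inner)
        define c where "c = (v \<bullet> h) / (norm v)\<^sup>2"
        have hc: "h = c *\<^sub>R v" using orth h'_def c_def \<open>v \<bullet> h' = 0\<close> by auto
        have vh: "v \<bullet> h = c * (norm v)\<^sup>2" using nz c_def by simp
        have "(v \<bullet> h) *\<^sub>R v = (norm v)\<^sup>2 *\<^sub>R h" unfolding vh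
          by (subst hc) (simp add: mult.commute)
        thus ?thesis by (simp add: outer_mv scal_mv)
      qed
      thus ?thesis using v_def matrix_eq by blast
    qed
    define s where "s = (\<lambda>j. \<Sum>m\<in>Nb j. (norm (F m x0))\<^sup>2)"
    have Qs: "Qmat Nb F j x0 = s j *\<^sub>R mat 1" if "j \<in> {1..N}" for j
      unfolding Qmat_def s_def scaleR_sum_left using outer_eq mem that by (intro sum.cong) auto
    have xk: "x k 0 = x0" and xl: "x l 0 = x0" using x_init k1 l1 by auto
    have ncard: "real (card (Nb l)) > 0" using nbhd_self[OF l1] fl card_gt_0_iff by fastforce
    have sl: "real (card (Nb l)) * sigma_min\<^sup>2 \<le> s l"
    proof -
      have "(\<Sum>m\<in>Nb l. sigma_min\<^sup>2) \<le> s l"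
        unfolding s_def using key mem l1 x0X A2_sord by (intro sum_mono power_mono) auto
      thus ?thesis by simp
    qed
    have smp: "sigma_min\<^sup>2 > 0" and sMp: "sigma_max\<^sup>2 > 0" using A2_sord by auto
    have slp: "s l > 0" using order_less_le_trans[OF mult_pos_pos[OF ncard smp] sl] .
    define A where "A = (\<Sum>m\<in>Nb k - Nb l. (norm (F m x0))\<^sup>2)"
    define B where "B = (\<Sum>m\<in>Nb l - Nb k. (norm (F m x0))\<^sup>2)"
    have diff: "s k - s l = A - B"
    proof -
      have e1: "s k = (\<Sum>m\<in>Nb k \<inter> Nb l. (norm (F m x0))\<^sup>2) + A"
        unfolding s_def A_def by (rule sum.Int_Diff[OF fk])
      have e2: "s l = (\<Sum>m\<in>Nb k \<inter> Nb l. (norm (F m x0))\<^sup>2) + B"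
        unfolding s_def B_def Int_commute[of "Nb k"] by (rule sum.Int_Diff[OF fl])
      show ?thesis unfolding e1 e2 by simp
    qed
    have A0: "A \<ge> 0" and B0: "B \<ge> 0" unfolding A_def B_def by (auto intro: sum_nonneg)
    have "A \<le> (\<Sum>m\<in>Nb k - Nb l. sigma_max\<^sup>2)" unfolding A_def
      using sq_le mem k1 x0X by (intro sum_mono) auto
    moreover have "B \<le> (\<Sum>m\<in>Nb l - Nb k. sigma_max\<^sup>2)" unfolding B_def
      using sq_le mem l1 x0X by (intro sum_mono) auto
    ultimately have AB: "A + B \<le> real (card (Nb k - Nb l) + card (Nb l - Nb k)) * sigma_max\<^sup>2"
      by (simp add: algebra_simps)
    have "real (card (Nb k - Nb l) + card (Nb l - Nb k)) * sigma_max\<^sup>2 < sigma_min\<^sup>2 * real (card (Nb l))"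
      using hyp ncard sMp by (simp add: field_simps)
    hence lt: "\<bar>s k - s l\<bar> < s l" using diff AB A0 B0 sl by (simp add: mult.commute)
    have meq: "matrix_inv (Qmat Nb F l (x l 0)) ** (Qmat Nb F k (x k 0) - Qmat Nb F l (x l 0))
          = ((s k - s l) / s l) *\<^sub>R mat 1"
    proof -
      have d: "s k *\<^sub>R mat 1 - s l *\<^sub>R mat 1 = (s k - s l) *\<^sub>R (mat 1 :: real^'m^'m)"
        by (simp add: scaleR_diff_left)
      have "((1 / s l) *\<^sub>R mat 1 ** ((s k - s l) *\<^sub>R mat 1)) *v h = (((s k - s l) / s l) *\<^sub>R mat 1) *v h"
        for h :: "real^'m"
        by (simp only: matrix_vector_mul_assoc[symmetric] scal_mv scaleR_scaleR) simp
      hence "(1 / s l) *\<^sub>R mat 1 ** ((s k - s l) *\<^sub>R mat 1) = ((s k - s l) / s l) *\<^sub>R (mat 1 :: real^'m^'m)"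
        using matrix_eq by blast
      thus ?thesis
        unfolding xk xl Qs[OF k1] Qs[OF l1] inv_scal[OF slp[THEN less_imp_neq, symmetric]] d .
    qed
    have "mnorm (matrix_inv (Qmat Nb F l (x l 0)) ** (Qmat Nb F k (x k 0) - Qmat Nb F l (x l 0)))
           \<le> \<bar>(s k - s l) / s l\<bar>" unfolding meq by (rule mnorm_scal)
    also have "\<dots> < 1" using lt slp by simp
    finally show ?thesis .
  qed
  show ?thesis
  proof (intro conjI allI impI)
    fix i show "mnorm (Qmat Nb F k (x k i) - Qmat Nb F l (x l i))
          \<le> real (card (Nb k \<inter> Nb l)) * \<gamma>_F * norm (x k i - x l i)
            + real (card (Nb k - Nb l) + card (Nb l - Nb k)) * sigma_max\<^sup>2" by (rule part1)
  next
    assume "real (card (Nb k - Nb l) + card (Nb l - Nb k)) / real (card (Nb l))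
            < sigma_min\<^sup>2 / sigma_max\<^sup>2 \<and> sigma_min\<^sup>2 / sigma_max\<^sup>2 < 1"
    then show "mnorm (matrix_inv (Qmat Nb F l (x l 0))
                  ** (Qmat Nb F k (x k 0) - Qmat Nb F l (x l 0))) < 1"
      by (intro part2) simp
  qed
qed

end
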